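(* In the setting of the IPM (with $\nu>0$, $\rho>0$, $f\in H^{-1}(\Omega)^d$, $g_h\in X_{h,\sim}$), the velocity iterates satisfy for every $i\ge2$ $$\|\operatorname{div}u_{h,i}\|_{L^2(\Omega)}\le\|\operatorname{div}u_{h,i-1}\|_{L^2(\Omega)}.$$
   Context: $\Omega\subset\mathbb R^d$, $d\ge2$, bounded polyhedral Lipschitz domain, outer normal $n$; $(\cdot,\cdot)$ $L^2$ inner product; $\langle\cdot,\cdot\rangle$ $H^{-1}$–$H^1_0$ duality; $H^1_\sim(\Omega)=\{v\in H^1(\Omega)^d:\int_{\partial\Omega}\operatorname{tr}(v)\cdot n\,d\sigma=0\}$. Scott–Vogelius setting: shape-regular conforming simplicial triangulation $\mathcal T_h$; $X_h=\mathcal L^1_k(\mathcal T_h)^d$ (continuous piecewise polynomials of degree $\le k$), $X_{h,\sim}=X_h\cap H^1_\sim$, $V_h=X_h\cap H^1_0(\Omega)^d$, with $\operatorname{div}V_h=\operatorname{div}X_{h,\sim}$. IPM: $\varphi_{h,0}=0$; for $i\ge1$, $u_{h,i}\in X_{h,\sim}$ with $\operatorname{tr}(u_{h,i})=\operatorname{tr}(g_h)$ and $\nu(\nabla u_{h,i},\nabla v_h)+\rho(\operatorname{div}u_{h,i},\operatorname{div}v_h)=\langle f,v_h\rangle+(\operatorname{div}\varphi_{h,i-1},\operatorname{div}v_h)$ for all $v_h\in V_h$; then $\varphi_{h,i}=\varphi_{h,i-1}-\rho u_{h,i}$. *)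

theory Defs
  imports "HOL-Analysis.Analysis"
begin

definition lipschitz_domain :: "(real^'d) set \<Rightarrow> bool" where
  "lipschitz_domain \<Omega> \<longleftrightarrow> open \<Omega> \<and> connected \<Omega> \<and> bounded \<Omega> \<and> \<Omega> \<noteq> {} \<and>
     (\<forall>x\<in>frontier \<Omega>. \<exists>(e::real^'d) (r::real) (L::real) (\<gamma>::real^'d \<Rightarrow> real).
        norm e = 1 \<and> r > 0 \<and> L-lipschitz_on {y. y \<bullet> e = 0} \<gamma> \<and>
        \<Omega> \<inter> ball x r = {y \<in> ball x r. (y - x) \<bullet> e < \<gamma> ((y - x) - ((y - x) \<bullet> e) *\<^sub>R e)})"

definition polyhedral_domain :: "(real^'d) set \<Rightarrow> bool" where
  "polyhedral_domain \<Omega> \<longleftrightarrow> (\<exists>P. finite P \<and> (\<forall>p\<in>P. polytope p) \<and> closure \<Omega> = \<Union>P)"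

definition verts :: "(real^'d) set \<Rightarrow> (real^'d) set" where
  "verts S = {x. x extreme_point_of S}"

definition conforming_triangulation :: "(real^'d) set set \<Rightarrow> (real^'d) set \<Rightarrow> bool" where
  "conforming_triangulation T \<Omega> \<longleftrightarrow> finite T \<and> T \<noteq> {} \<and>
     (\<forall>S\<in>T. int CARD('d) simplex S) \<and> \<Union>T = closure \<Omega> \<and>
     (\<forall>S\<in>T. \<forall>S'\<in>T. (S \<inter> S') face_of S \<and> (S \<inter> S') face_of S')"

definition poly_le :: "nat \<Rightarrow> (real^'d \<Rightarrow> real) \<Rightarrow> bool" where
  "poly_le k p \<longleftrightarrow> (\<exists>c :: ('d \<Rightarrow> nat) \<Rightarrow> real. \<forall>x. p x =
     (\<Sum>\<alpha>\<in>{\<alpha>::'d \<Rightarrow> nat. (\<Sum>i\<in>UNIV. \<alpha> i) \<le> k}. c \<alpha> * (\<Prod>i\<in>UNIV. (x $ i) ^ \<alpha> i)))"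

definition Xh :: "(real^'d) set set \<Rightarrow> (real^'d) set \<Rightarrow> nat \<Rightarrow> (real^'d \<Rightarrow> real^'d) set" where
  "Xh T \<Omega> k = {v. continuous_on (closure \<Omega>) v \<and>
     (\<forall>S\<in>T. \<forall>j. \<exists>p. poly_le k p \<and> (\<forall>x\<in>S. v x $ j = p x))}"

text \<open>Partial derivative d_l v_j (classical, exists a.e. for elements of X_h; coincides with
  the weak derivative there).\<close>
definition pd :: "(real^'d \<Rightarrow> real^'d) \<Rightarrow> 'd \<Rightarrow> 'd \<Rightarrow> real^'d \<Rightarrow> real" where
  "pd v l j x = frechet_derivative v (at x) (axis l (1::real)) $ j"

definition divg :: "(real^'d \<Rightarrow> real^'d) \<Rightarrow> real^'d \<Rightarrow> real" where
  "divg v x = (\<Sum>j\<in>UNIV. pd v j j x)"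

definition l2_ip :: "(real^'d) set \<Rightarrow> (real^'d \<Rightarrow> real) \<Rightarrow> (real^'d \<Rightarrow> real) \<Rightarrow> real" where
  "l2_ip \<Omega> a b = (LINT x:\<Omega>|lebesgue. a x * b x)"

definition l2_norm :: "(real^'d) set \<Rightarrow> (real^'d \<Rightarrow> real) \<Rightarrow> real" where
  "l2_norm \<Omega> a = sqrt (LINT x:\<Omega>|lebesgue. (a x)^2)"

definition grad_ip :: "(real^'d) set \<Rightarrow> (real^'d \<Rightarrow> real^'d) \<Rightarrow> (real^'d \<Rightarrow> real^'d) \<Rightarrow> real" where
  "grad_ip \<Omega> u v = (LINT x:\<Omega>|lebesgue. (\<Sum>j\<in>UNIV. \<Sum>l\<in>UNIV. pd u l j x * pd v l j x))"

definition facet :: "(real^'d) set \<Rightarrow> real^'d \<Rightarrow> (real^'d) set" where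
  "facet S p = convex hull (verts S - {p})"

definition outer_normal :: "(real^'d) set \<Rightarrow> real^'d \<Rightarrow> real^'d" where
  "outer_normal S p = (SOME n. norm n = 1 \<and> (\<forall>a\<in>facet S p. \<forall>b\<in>facet S p. (a - b) \<bullet> n = 0)
                              \<and> (\<forall>a\<in>facet S p. (p - a) \<bullet> n < 0))"

text \<open>Surface integral over a flat (d-1)-dimensional piece F with unit normal n:
  integrate phi composed with the orthogonal projection onto the hyperplane of F
  over the unit-height prism F + [0,1] n (Fubini gives exactly the surface integral).\<close>
definition flat_surface_integral :: "(real^'d) set \<Rightarrow> real^'d \<Rightarrow> (real^'d \<Rightarrow> real) \<Rightarrow> real" where
  "flat_surface_integral F n \<phi> =
     (let a = (SOME a. a \<in> F) in
      LINT y:{x + s *\<^sub>R n | x s. x \<in> F \<and> s \<in> {0..1}}|lebesgue. \<phi> (y - ((y - a) \<bullet> n) *\<^sub>R n))"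

definition boundary_facets :: "(real^'d) set set \<Rightarrow> (real^'d) set \<Rightarrow> ((real^'d) set \<times> (real^'d)) set" where
  "boundary_facets T \<Omega> = {(S, p). S \<in> T \<and> p \<in> verts S \<and> facet S p \<subseteq> frontier \<Omega>}"

definition boundary_flux :: "(real^'d) set set \<Rightarrow> (real^'d) set \<Rightarrow> (real^'d \<Rightarrow> real^'d) \<Rightarrow> real" where
  "boundary_flux T \<Omega> v = (\<Sum>(S, p)\<in>boundary_facets T \<Omega>.
      flat_surface_integral (facet S p) (outer_normal S p) (\<lambda>x. v x \<bullet> outer_normal S p))"

text \<open>X_{h,~} = X_h intersected with H^1_~.\<close>
definition Xh_tilde :: "(real^'d) set set \<Rightarrow> (real^'d) set \<Rightarrow> nat \<Rightarrow> (real^'d \<Rightarrow> real^'d) set" where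
  "Xh_tilde T \<Omega> k = {v \<in> Xh T \<Omega> k. boundary_flux T \<Omega> v = 0}"

definition Vh :: "(real^'d) set set \<Rightarrow> (real^'d) set \<Rightarrow> nat \<Rightarrow> (real^'d \<Rightarrow> real^'d) set" where
  "Vh T \<Omega> k = {v \<in> Xh T \<Omega> k. \<forall>x\<in>frontier \<Omega>. v x = 0}"

text \<open>div V_h = div X_{h,~} (as subsets of L^2, i.e. up to null sets).\<close>
definition div_compatible :: "(real^'d) set set \<Rightarrow> (real^'d) set \<Rightarrow> nat \<Rightarrow> bool" where
  "div_compatible T \<Omega> k \<longleftrightarrow>
     (\<forall>w\<in>Xh_tilde T \<Omega> k. \<exists>v\<in>Vh T \<Omega> k. AE x in lebesgue. x \<in> \<Omega> \<longrightarrow> divg v x = divg w x) \<and>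
     (\<forall>v\<in>Vh T \<Omega> k. \<exists>w\<in>Xh_tilde T \<Omega> k. AE x in lebesgue. x \<in> \<Omega> \<longrightarrow> divg w x = divg v x)"

end

theory Submission imports Defs "HOL-Analysis.Analysis" begin

definition smooth1 :: "(real^'d \<Rightarrow> real) \<Rightarrow> bool" where
  "smooth1 p \<longleftrightarrow> (\<exists>D. (\<forall>x. (p has_derivative D x) (at x)) \<and> (\<forall>h. continuous_on UNIV (\<lambda>x. D x h)))"

lemma smooth1_const: "smooth1 (\<lambda>x. c)"
  unfolding smooth1_def by (rule exI[of _ "\<lambda>x h. 0"]) auto

lemma smooth1_coord: "smooth1 (\<lambda>x. x $ i)"
  unfolding smooth1_def
  by (rule exI[of _ "\<lambda>x h. h $ i"]) (auto intro: bounded_linear_imp_has_derivative)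

lemma smooth1_add: "smooth1 p \<Longrightarrow> smooth1 q \<Longrightarrow> smooth1 (\<lambda>x. p x + q x)"
  unfolding smooth1_def
  apply (elim exE conjE)
  subgoal for D E by (rule exI[of _ "\<lambda>x h. D x h + E x h"]) (auto intro!: derivative_eq_intros continuous_intros)
  done

lemma smooth1_mult: "smooth1 p \<Longrightarrow> smooth1 q \<Longrightarrow> smooth1 (\<lambda>x. p x * q x)"
  unfolding smooth1_def
  apply (elim exE conjE)
  subgoal for D E
  proof -
    assume a: "\<forall>x. (p has_derivative D x) (at x)" "\<forall>h. continuous_on UNIV (\<lambda>x. D x h)"
       "\<forall>x. (q has_derivative E x) (at x)" "\<forall>h. continuous_on UNIV (\<lambda>x. E x h)"
    have cp: "continuous_on UNIV p" "continuous_on UNIV q"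
      using a by (metis continuous_at_imp_continuous_on has_derivative_continuous)+
    show ?thesis
      by (rule exI[of _ "\<lambda>x h. p x * E x h + D x h * q x"])
        (use a cp in \<open>auto intro!: derivative_eq_intros continuous_intros\<close>)
  qed
  done

lemma smooth1_sum: "(\<And>a. a \<in> A \<Longrightarrow> smooth1 (f a)) \<Longrightarrow> smooth1 (\<lambda>x. \<Sum>a\<in>A. f a x)"
proof (induction A rule: infinite_finite_induct)
  case (infinite A) then show ?case by (simp add: smooth1_const)
next
  case empty then show ?case by (simp add: smooth1_const)
next
  case (insert a A) then show ?case by (simp add: smooth1_add)
qed

lemma smooth1_prod: "(\<And>a. a \<in> A \<Longrightarrow> smooth1 (f a)) \<Longrightarrow> smooth1 (\<lambda>x. \<Prod>a\<in>A. f a x)"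
proof (induction A rule: infinite_finite_induct)
  case (infinite A) then show ?case by (simp add: smooth1_const)
next
  case empty then show ?case by (simp add: smooth1_const)
next
  case (insert a A) then show ?case by (simp add: smooth1_mult)
qed

lemma smooth1_power: "smooth1 p \<Longrightarrow> smooth1 (\<lambda>x. p x ^ n)"
  by (induction n) (simp_all add: smooth1_const smooth1_mult)

lemma poly_le_smooth1: fixes p :: "real^'d \<Rightarrow> real" shows "poly_le k p \<Longrightarrow> smooth1 p"
proof -
  assume "poly_le k p"
  then obtain c :: "('d \<Rightarrow> nat) \<Rightarrow> real" where c: "\<forall>x. p x =
     (\<Sum>\<alpha>\<in>{\<alpha>::'d \<Rightarrow> nat. (\<Sum>i\<in>(UNIV::'d set). \<alpha> i) \<le> k}. c \<alpha> * (\<Prod>i\<in>UNIV. (x $ i) ^ \<alpha> i))"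
    unfolding poly_le_def by blast
  have "p = (\<lambda>x. \<Sum>\<alpha>\<in>{\<alpha>::'d \<Rightarrow> nat. (\<Sum>i\<in>(UNIV::'d set). \<alpha> i) \<le> k}. c \<alpha> * (\<Prod>i\<in>UNIV. (x $ i) ^ \<alpha> i))"
    using c by auto
  moreover have "smooth1 (\<lambda>x. \<Sum>\<alpha>\<in>{\<alpha>::'d \<Rightarrow> nat. (\<Sum>i\<in>(UNIV::'d set). \<alpha> i) \<le> k}. c \<alpha> * (\<Prod>i\<in>UNIV. (x $ i) ^ \<alpha> i))"
    by (intro smooth1_sum smooth1_mult smooth1_const smooth1_prod smooth1_power smooth1_coord)
  ultimately show ?thesis by simp
qed

lemma poly_le_lin: fixes p q :: "real^'d \<Rightarrow> real" shows "poly_le k p \<Longrightarrow> poly_le k q \<Longrightarrow> poly_le k (\<lambda>x. a * p x + b * q x)"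
proof -
  assume "poly_le k p" "poly_le k q"
  then obtain c c' :: "('d \<Rightarrow> nat) \<Rightarrow> real" where c: "\<forall>x. p x =
     (\<Sum>\<alpha>\<in>{\<alpha>::'d \<Rightarrow> nat. (\<Sum>i\<in>(UNIV::'d set). \<alpha> i) \<le> k}. c \<alpha> * (\<Prod>i\<in>UNIV. (x $ i) ^ \<alpha> i))"
    and c': "\<forall>x. q x =
     (\<Sum>\<alpha>\<in>{\<alpha>::'d \<Rightarrow> nat. (\<Sum>i\<in>(UNIV::'d set). \<alpha> i) \<le> k}. c' \<alpha> * (\<Prod>i\<in>UNIV. (x $ i) ^ \<alpha> i))"
    unfolding poly_le_def by blast
  show ?thesis unfolding poly_le_def
    by (rule exI[of _ "\<lambda>\<alpha>. a * c \<alpha> + b * c' \<alpha>"])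
       (simp add: c c' sum_distrib_left sum.distrib algebra_simps)
qed

lemma vec_has_derivative:
  fixes f :: "real^'d \<Rightarrow> real^'d"
  assumes "\<And>j. ((\<lambda>y. f y $ j) has_derivative D j) (at x)"
  shows "(f has_derivative (\<lambda>h. \<chi> j. D j h)) (at x)"
  using assms
  by (subst has_derivative_componentwise_within) (auto simp: Basis_vec_def cart_eq_inner_axis[symmetric])


lemma Xh_lin:
  assumes "v \<in> Xh T \<Omega> k" "w \<in> Xh T \<Omega> k"
  shows "(\<lambda>x. a *\<^sub>R v x + b *\<^sub>R w x) \<in> Xh T \<Omega> k"
proof -
  have cv: "continuous_on (closure \<Omega>) v" and cw: "continuous_on (closure \<Omega>) w"
    using assms unfolding Xh_def by auto
  have "\<exists>p. poly_le k p \<and> (\<forall>x\<in>S. (a *\<^sub>R v x + b *\<^sub>R w x) $ j = p x)" if S: "S \<in> T" for S j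
  proof -
    obtain p where p: "poly_le k p" "\<forall>x\<in>S. v x $ j = p x" using assms(1) S unfolding Xh_def by blast
    obtain q where q: "poly_le k q" "\<forall>x\<in>S. w x $ j = q x" using assms(2) S unfolding Xh_def by blast
    show ?thesis
      by (rule exI[of _ "\<lambda>x. a * p x + b * q x"]) (use p q poly_le_lin in auto)
  qed
  moreover have "continuous_on (closure \<Omega>) (\<lambda>x. a *\<^sub>R v x + b *\<^sub>R w x)"
    by (intro continuous_intros cv cw)
  ultimately show ?thesis unfolding Xh_def by blast
qed

lemma Xh_diff: "v \<in> Xh T \<Omega> k \<Longrightarrow> w \<in> Xh T \<Omega> k \<Longrightarrow> (\<lambda>x. v x - w x) \<in> Xh T \<Omega> k"
  using Xh_lin[of v T \<Omega> k w 1 "-1"] by simp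

lemma Xh_diff_scale: "v \<in> Xh T \<Omega> k \<Longrightarrow> w \<in> Xh T \<Omega> k \<Longrightarrow> (\<lambda>x. v x - c *\<^sub>R w x) \<in> Xh T \<Omega> k"
  using Xh_lin[of v T \<Omega> k w 1 "-c"] by simp

lemma Xh_zero: "(\<lambda>x. 0) \<in> Xh T \<Omega> k"
  unfolding Xh_def poly_le_def by (auto intro!: exI[of _ "\<lambda>_. 0"])

lemma Xh_local_deriv:
  fixes v :: "real^'d \<Rightarrow> real^'d"
  assumes "v \<in> Xh T \<Omega> k" "S \<in> T"
  shows "\<exists>D. (\<forall>x\<in>interior S. (v has_derivative D x) (at x)) \<and> (\<forall>h. continuous_on UNIV (\<lambda>x. D x h))"
proof -
  have "\<forall>j. \<exists>p. poly_le k p \<and> (\<forall>x\<in>S. v x $ j = p x)" using assms unfolding Xh_def by blast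
  then obtain P where P: "\<And>j. poly_le k (P j)" "\<And>j x. x \<in> S \<Longrightarrow> v x $ j = P j x" by metis
  have "\<forall>j. \<exists>D. (\<forall>x. (P j has_derivative D x) (at x)) \<and> (\<forall>h. continuous_on UNIV (\<lambda>x. D x h))"
    using P(1) poly_le_smooth1 unfolding smooth1_def by blast
  then obtain DD where DD: "\<And>j x. (P j has_derivative DD j x) (at x)"
     "\<And>j h. continuous_on UNIV (\<lambda>x. DD j x h)" by metis
  show ?thesis
  proof (intro exI[of _ "\<lambda>x h. \<chi> j. DD j x h"] conjI ballI allI)
    fix h show "continuous_on UNIV (\<lambda>x. \<chi> j. DD j x h)"
      by (intro continuous_on_vec_lambda DD(2))
  next
    fix x assume x: "x \<in> interior S"
    have "((\<lambda>y. \<chi> j. P j y) has_derivative (\<lambda>h. \<chi> j. DD j x h)) (at x)"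
      by (rule vec_has_derivative) (simp add: DD(1))
    then show "(v has_derivative (\<lambda>h. \<chi> j. DD j x h)) (at x)"
      by (rule has_derivative_transform_within_open[OF _ open_interior x])
         (use P(2) interior_subset in \<open>force simp: vec_eq_iff\<close>)
  qed
qed

definition N0 :: "(real^'d) set set \<Rightarrow> (real^'d) set" where
  "N0 T = (\<Union>S\<in>T. frontier S)"

lemma negligible_N0:
  assumes "conforming_triangulation T \<Omega>"
  shows "negligible (N0 T)"
  unfolding N0_def
  using assms unfolding conforming_triangulation_def
  by (intro negligible_Union) (auto intro!: negligible_convex_frontier convex_simplex)

lemma N0_interior:
  assumes "conforming_triangulation T \<Omega>" "x \<in> \<Omega>" "x \<notin> N0 T"
  shows "\<exists>S\<in>T. x \<in> interior S"
proof -
  have "x \<in> \<Union>T" using assms closure_subset unfolding conforming_triangulation_def by blast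
  then obtain S where S: "S \<in> T" "x \<in> S" by blast
  have "closed S" using assms(1) S(1) unfolding conforming_triangulation_def
    by (meson compact_imp_closed compact_simplex)
  then have "x \<in> interior S" using S assms(3) unfolding N0_def frontier_def by auto
  then show ?thesis using S by blast
qed

lemma Xh_diff_at:
  assumes "conforming_triangulation T \<Omega>" "v \<in> Xh T \<Omega> k" "x \<in> \<Omega>" "x \<notin> N0 T"
  shows "v differentiable (at x)"
  using N0_interior[OF assms(1,3,4)] Xh_local_deriv[OF assms(2)] unfolding differentiable_def by blast

lemma pd_lin:
  assumes "v differentiable (at x)" "w differentiable (at x)"
  shows "pd (\<lambda>y. a *\<^sub>R v y + b *\<^sub>R w y) l j x = a * pd v l j x + b * pd w l j x"
proof -
  have "((\<lambda>y. a *\<^sub>R v y + b *\<^sub>R w y) has_derivative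
      (\<lambda>h. a *\<^sub>R frechet_derivative v (at x) h + b *\<^sub>R frechet_derivative w (at x) h)) (at x)"
    using assms by (intro derivative_intros) (auto simp: frechet_derivative_works[symmetric])
  from frechet_derivative_at[OF this, symmetric] show ?thesis unfolding pd_def
    by simp
qed

lemma measurable_on_Un':
  assumes "f measurable_on A" "f measurable_on B" "A \<in> sets lebesgue" "B \<in> sets lebesgue"
  shows "f measurable_on (A \<union> B)"
proof -
  have fA: "(\<lambda>x. if x \<in> A then f x else 0) measurable_on UNIV"
    using assms measurable_on_UNIV by blast
  have fB: "(\<lambda>x. if x \<in> B then f x else 0) measurable_on UNIV"
    using assms measurable_on_UNIV by blast
  have cA: "- A \<in> sets lebesgue" using assms(3) by (metis Compl_eq_Diff_UNIV sets.compl_sets space_borel space_completion space_lborel)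
  have "(\<lambda>x. if x \<in> - A then (if x \<in> B then f x else 0) else 0) measurable_on UNIV"
    by (rule measurable_on_restrict[OF fB cA])
  from measurable_on_add[OF fA this]
  have "(\<lambda>x. if x \<in> A \<union> B then f x else 0) measurable_on UNIV"
    by (rule measurable_on_spike[where S="{}"]) auto
  then show ?thesis using measurable_on_UNIV by blast
qed

lemma measurable_on_Union':
  assumes "finite F" "\<And>A. A \<in> F \<Longrightarrow> f measurable_on A" "\<And>A. A \<in> F \<Longrightarrow> A \<in> sets lebesgue"
  shows "f measurable_on (\<Union>F)"
  using assms
proof (induction F rule: finite_induct)
  case empty then show ?case using measurable_on_UNIV[of "{}" f] measurable_on_0[of UNIV] by simp
next
  case (insert A F)
  have "\<Union>F \<in> sets lebesgue" using insert.prems(2) insert.hyps(1) by (intro sets.finite_Union) auto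
  moreover have "f measurable_on (\<Union>F)" using insert.IH insert.prems by blast
  ultimately show ?case using insert.prems measurable_on_Un'[of f A "\<Union>F"] by simp
qed


lemma open_sets_lebesgue: "open A \<Longrightarrow> A \<in> sets lebesgue"
  by (simp add: borel_open sets_completionI_sets)

definition good :: "(real^'d) set \<Rightarrow> (real^'d) set \<Rightarrow> (real^'d \<Rightarrow> real) \<Rightarrow> bool" where
  "good \<Omega> N f \<longleftrightarrow> f measurable_on \<Omega> \<and> (\<exists>B. \<forall>x\<in>\<Omega>-N. \<bar>f x\<bar> \<le> B)"

lemma good_add: "good \<Omega> N f \<Longrightarrow> good \<Omega> N g \<Longrightarrow> good \<Omega> N (\<lambda>x. f x + g x)"
  unfolding good_def
  apply (elim conjE exE)
  subgoal for B C
    by (intro conjI measurable_on_add exI[of _ "B + C"]) (auto intro: abs_triangle_ineq[THEN order_trans] add_mono)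
  done

lemma good_minus: "good \<Omega> N f \<Longrightarrow> good \<Omega> N (\<lambda>x. - f x)"
  unfolding good_def using measurable_on_minus by fastforce

lemma good_diff: "good \<Omega> N f \<Longrightarrow> good \<Omega> N g \<Longrightarrow> good \<Omega> N (\<lambda>x. f x - g x)"
  using good_add[of \<Omega> N f "\<lambda>x. - g x"] good_minus[of \<Omega> N g] by simp

lemma good_mult: "good \<Omega> N f \<Longrightarrow> good \<Omega> N g \<Longrightarrow> good \<Omega> N (\<lambda>x. f x * g x)"
  unfolding good_def
  apply (elim conjE exE)
  subgoal for B C
  proof (intro conjI exI[of _ "B * C"])
    assume a: "f measurable_on \<Omega>" "g measurable_on \<Omega>" "\<forall>x\<in>\<Omega> - N. \<bar>f x\<bar> \<le> B" "\<forall>x\<in>\<Omega> - N. \<bar>g x\<bar> \<le> C"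
    show "(\<lambda>x. f x * g x) measurable_on \<Omega>" using measurable_on_scaleR[OF a(1,2)] by simp
    show "\<forall>x\<in>\<Omega> - N. \<bar>f x * g x\<bar> \<le> B * C"
      using a(3,4) by (auto simp: abs_mult intro!: mult_mono)
  qed
  done

lemma good_cmul: "good \<Omega> N f \<Longrightarrow> good \<Omega> N (\<lambda>x. c * f x)"
  unfolding good_def
  apply (elim conjE exE)
  subgoal for B
    by (intro conjI measurable_on_cmul exI[of _ "\<bar>c\<bar> * B"]) (auto simp: abs_mult intro!: mult_left_mono)
  done

lemma good_sum: "finite I \<Longrightarrow> (\<And>i. i \<in> I \<Longrightarrow> good \<Omega> N (f i)) \<Longrightarrow> good \<Omega> N (\<lambda>x. \<Sum>i\<in>I. f i x)"
proof (induction I rule: finite_induct)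
  case empty then show ?case unfolding good_def by (auto intro!: exI[of _ 0])
next
  case (insert a I) then show ?case by (simp add: good_add)
qed

lemma good_abs_int:
  assumes "\<Omega> \<in> lmeasurable" "good \<Omega> N f" "negligible N"
  shows "f absolutely_integrable_on \<Omega>"
proof -
  obtain B where B: "\<forall>x\<in>\<Omega>-N. \<bar>f x\<bar> \<le> B" and fm: "f measurable_on \<Omega>" using assms(2) unfolding good_def by blast
  define g where "g x = (if x \<in> N then 0 else f x)" for x
  have gm: "g measurable_on \<Omega>" by (rule measurable_on_spike[OF fm assms(3)]) (simp add: g_def)
  have L: "\<Omega> \<in> sets lebesgue" using assms(1) by (simp add: fmeasurableD)
  have "g absolutely_integrable_on \<Omega>"
  proof (rule measurable_bounded_by_integrable_imp_absolutely_integrable[OF _ L])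
    show "g \<in> borel_measurable (lebesgue_on \<Omega>)" using gm measurable_on_iff_borel_measurable[OF L] by blast
    show "(\<lambda>x. \<bar>B\<bar>) integrable_on \<Omega>" by (rule integrable_on_const[OF assms(1)])
    show "norm (g x) \<le> \<bar>B\<bar>" if "x \<in> \<Omega>" for x using B that by (auto simp: g_def) (meson DiffI abs_ge_self order_trans)
  qed
  then show ?thesis by (rule absolutely_integrable_spike[OF _ assms(3)]) (simp add: g_def)
qed

lemma pd_good:
  fixes v :: "real^'d \<Rightarrow> real^'d"
  assumes tri: "conforming_triangulation T \<Omega>" and op: "open \<Omega>" and v: "v \<in> Xh T \<Omega> k"
  shows "good \<Omega> (N0 T) (\<lambda>x. pd v l j x)"
proof -
  have "\<forall>S\<in>T. \<exists>D. (\<forall>x\<in>interior S. (v has_derivative D x) (at x)) \<and> (\<forall>h. continuous_on UNIV (\<lambda>x. D x h))"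
    using Xh_local_deriv[OF v] by blast
  then obtain DS where DS: "\<And>S x. S \<in> T \<Longrightarrow> x \<in> interior S \<Longrightarrow> (v has_derivative DS S x) (at x)"
    "\<And>S h. S \<in> T \<Longrightarrow> continuous_on UNIV (\<lambda>x. DS S x h)"
    using bchoice[of T] by metis
  have eq: "pd v l j x = DS S x (axis l 1) $ j" if "S \<in> T" "x \<in> interior S" for S x
    unfolding pd_def using frechet_derivative_at[OF DS(1)[OF that]] by simp
  have cont: "continuous_on UNIV (\<lambda>x. DS S x (axis l 1) $ j)" if "S \<in> T" for S
    using DS(2)[OF that] by (intro continuous_intros)
  define U where "U = (\<Union>S\<in>T. \<Omega> \<inter> interior S)"
  have fin: "finite T" using tri unfolding conforming_triangulation_def by blast
  have mU: "(\<lambda>x. pd v l j x) measurable_on U"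
    unfolding U_def
  proof (rule measurable_on_Union')
    show "finite ((\<lambda>S. \<Omega> \<inter> interior S) ` T)" using fin by simp
    fix A assume "A \<in> (\<lambda>S. \<Omega> \<inter> interior S) ` T"
    then obtain S where S: "S \<in> T" "A = \<Omega> \<inter> interior S" by blast
    have LA: "A \<in> sets lebesgue" using S op by (simp add: open_Int open_sets_lebesgue)
    have "continuous_on A (\<lambda>x. pd v l j x)"
      by (rule continuous_on_eq[OF continuous_on_subset[OF cont[OF S(1)]]]) (use S eq in auto)
    then show "(\<lambda>x. pd v l j x) measurable_on A"
      using continuous_imp_measurable_on_sets_lebesgue[OF _ LA] measurable_on_iff_borel_measurable[OF LA] by blast
    show "A \<in> sets lebesgue" by (rule LA)
  qed
  have sub: "(U - \<Omega>) \<union> (\<Omega> - U) \<subseteq> N0 T"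
    using N0_interior[OF tri] unfolding U_def by blast
  have m: "(\<lambda>x. pd v l j x) measurable_on \<Omega>"
    by (rule measurable_on_spike_set[OF mU negligible_subset[OF negligible_N0[OF tri] sub]])
  have "\<forall>S\<in>T. \<exists>b>0. \<forall>x\<in>S. \<bar>DS S x (axis l 1) $ j\<bar> \<le> b"
  proof
    fix S assume S: "S \<in> T"
    have "compact S" using S tri unfolding conforming_triangulation_def by (meson compact_simplex)
    then have "bounded ((\<lambda>x. DS S x (axis l 1) $ j) ` S)"
      by (intro compact_imp_bounded compact_continuous_image continuous_on_subset[OF cont[OF S]]) auto
    then show "\<exists>b>0. \<forall>x\<in>S. \<bar>DS S x (axis l 1) $ j\<bar> \<le> b" unfolding bounded_pos by auto
  qed
  then obtain BS where BS: "\<And>S. S \<in> T \<Longrightarrow> BS S > 0" "\<And>S x. S \<in> T \<Longrightarrow> x \<in> S \<Longrightarrow> \<bar>DS S x (axis l 1) $ j\<bar> \<le> BS S"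
    using bchoice[of T] by metis
  have "\<forall>x\<in>\<Omega> - N0 T. \<bar>pd v l j x\<bar> \<le> (\<Sum>S\<in>T. BS S)"
  proof
    fix x assume x: "x \<in> \<Omega> - N0 T"
    then obtain S where S: "S \<in> T" "x \<in> interior S" using N0_interior[OF tri] by blast
    have "\<bar>pd v l j x\<bar> \<le> BS S" using eq[OF S] BS(2)[OF S(1)] S(2) interior_subset by auto
    also have "\<dots> \<le> (\<Sum>S\<in>T. BS S)" by (rule member_le_sum[OF S(1)]) (use BS(1) less_imp_le fin in auto)
    finally show "\<bar>pd v l j x\<bar> \<le> (\<Sum>S\<in>T. BS S)" .
  qed
  then show ?thesis unfolding good_def using m by blast
qed


lemma divg_good:
  assumes "conforming_triangulation T \<Omega>" "open \<Omega>" "v \<in> Xh T \<Omega> k"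
  shows "good \<Omega> (N0 T) (divg v)"
  unfolding divg_def[abs_def] by (intro good_sum pd_good[OF assms]) auto

lemma grad_good:
  assumes "conforming_triangulation T \<Omega>" "open \<Omega>" "v \<in> Xh T \<Omega> k" "w \<in> Xh T \<Omega> k"
  shows "good \<Omega> (N0 T) (\<lambda>x. \<Sum>j\<in>UNIV. \<Sum>l\<in>UNIV. pd v l j x * pd w l j x)"
  by (intro good_sum good_mult pd_good[OF assms(1,2,3)] pd_good[OF assms(1,2,4)]) auto

lemma LINT_eq:
  assumes "\<Omega> \<in> lmeasurable" "good \<Omega> N f" "negligible N"
  shows "(LINT x:\<Omega>|lebesgue. f x) = integral \<Omega> f" "(f has_integral integral \<Omega> f) \<Omega>"
proof -
  have "set_integrable lebesgue \<Omega> f" using good_abs_int[OF assms] by simp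
  from set_lebesgue_integral_eq_integral[OF this]
  show "(LINT x:\<Omega>|lebesgue. f x) = integral \<Omega> f" "(f has_integral integral \<Omega> f) \<Omega>"
    by (auto simp: has_integral_integral)
qed

lemma divg_lin:
  assumes "v differentiable (at x)" "w differentiable (at x)"
  shows "divg (\<lambda>y. a *\<^sub>R v y + b *\<^sub>R w y) x = a * divg v x + b * divg w x"
  unfolding divg_def using pd_lin[OF assms]
  by (simp add: sum.distrib sum_distrib_left)

theorem mainTheorem9:
  fixes \<Omega> :: "(real^'d) set" and T :: "(real^'d) set set" and k :: nat
    and \<nu> \<rho> :: real and f :: "(real^'d \<Rightarrow> real^'d) \<Rightarrow> real" and g :: "real^'d \<Rightarrow> real^'d"
    and u \<phi> :: "nat \<Rightarrow> real^'d \<Rightarrow> real^'d" and i :: nat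
  assumes dim: "CARD('d) \<ge> 2"
    and dom: "lipschitz_domain \<Omega>" "polyhedral_domain \<Omega>"
    and tri: "conforming_triangulation T \<Omega>"
    and SV: "div_compatible T \<Omega> k"
    and nu: "\<nu> > 0" and rho: "\<rho> > 0"
    and f_lin: "\<forall>v\<in>Vh T \<Omega> k. \<forall>w\<in>Vh T \<Omega> k. \<forall>a b::real.
                  f (\<lambda>x. a *\<^sub>R v x + b *\<^sub>R w x) = a * f v + b * f w"
    and g: "g \<in> Xh_tilde T \<Omega> k"
    and phi0: "\<phi> 0 = (\<lambda>x. 0)"
    and u_step: "\<forall>j\<ge>1. u j \<in> Xh_tilde T \<Omega> k \<and> (\<forall>x\<in>frontier \<Omega>. u j x = g x) \<and>
                   (\<forall>v\<in>Vh T \<Omega> k. \<nu> * grad_ip \<Omega> (u j) v + \<rho> * l2_ip \<Omega> (divg (u j)) (divg v)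
                        = f v + l2_ip \<Omega> (divg (\<phi> (j - 1))) (divg v))"
    and phi_step: "\<forall>j\<ge>1. \<phi> j = (\<lambda>x. \<phi> (j - 1) x - \<rho> *\<^sub>R u j x)"
    and i: "i \<ge> 2"
  shows "l2_norm \<Omega> (divg (u i)) \<le> l2_norm \<Omega> (divg (u (i - 1)))"
proof -
  note L0 = dom(1)[unfolded lipschitz_domain_def]
  have op: "open \<Omega>" using L0 by (rule conjunct1)
  have bd: "bounded \<Omega>" using L0 by (rule conjunct2[THEN conjunct2, THEN conjunct1])
  have lm: "\<Omega> \<in> lmeasurable" by (rule lmeasurable_open[OF bd op])
  define N where "N = N0 T"
  have negN: "negligible N" unfolding N_def by (rule negligible_N0[OF tri])
  have US: "\<And>j v. j \<ge> 1 \<Longrightarrow> v \<in> Vh T \<Omega> k \<Longrightarrow> \<nu> * grad_ip \<Omega> (u j) v + \<rho> * l2_ip \<Omega> (divg (u j)) (divg v)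
                        = f v + l2_ip \<Omega> (divg (\<phi> (j - 1))) (divg v)" using u_step by blast
  have UB: "\<And>j x. j \<ge> 1 \<Longrightarrow> x \<in> frontier \<Omega> \<Longrightarrow> u j x = g x" using u_step by blast
  have UT: "\<And>j. j \<ge> 1 \<Longrightarrow> u j \<in> Xh_tilde T \<Omega> k" using u_step by blast
  have uX: "u j \<in> Xh T \<Omega> k" if "j \<ge> 1" for j using UT[OF that] unfolding Xh_tilde_def by blast
  have phiX: "\<phi> j \<in> Xh T \<Omega> k" for j
  proof (induction j)
    case 0 then show ?case using phi0 Xh_zero by simp
  next
    case (Suc j)
    have "\<phi> (Suc j) = (\<lambda>x. \<phi> (Suc j - 1) x - \<rho> *\<^sub>R u (Suc j) x)" using phi_step[rule_format, of "Suc j"] by simp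
    then have "\<phi> (Suc j) = (\<lambda>x. \<phi> j x - \<rho> *\<^sub>R u (Suc j) x)" by simp
    then show ?case using Xh_diff_scale[OF Suc uX[of "Suc j"]] by simp
  qed
  define a where "a = u i"
  define b where "b = u (i - 1)"
  define P where "P = \<phi> (i - 1)"
  define Q where "Q = \<phi> (i - 2)"
  define e where "e = (\<lambda>x. a x - b x)"
  have aX: "a \<in> Xh T \<Omega> k" and bX: "b \<in> Xh T \<Omega> k" using uX i unfolding a_def b_def by auto
  have PX: "P \<in> Xh T \<Omega> k" and QX: "Q \<in> Xh T \<Omega> k" using phiX unfolding P_def Q_def by auto
  have eX: "e \<in> Xh T \<Omega> k" unfolding e_def by (rule Xh_diff[OF aX bX])
  have i1: "i - 1 \<ge> 1" "i - 1 - 1 = i - 2" "i \<ge> 1" using i by auto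
  have "\<phi> (i - 1) = (\<lambda>x. \<phi> (i - 1 - 1) x - \<rho> *\<^sub>R u (i - 1) x)" using phi_step[rule_format, OF i1(1)] .
  then have PQ: "P = (\<lambda>x. Q x - \<rho> *\<^sub>R b x)"
    unfolding P_def Q_def b_def i1(2) by simp
  have eV: "e \<in> Vh T \<Omega> k"
    using eX UB[OF i1(3)] UB[OF i1(1)] unfolding Vh_def e_def a_def b_def by simp
  have E1: "\<nu> * grad_ip \<Omega> a e + \<rho> * l2_ip \<Omega> (divg a) (divg e) = f e + l2_ip \<Omega> (divg P) (divg e)"
    unfolding a_def P_def by (rule US[OF i1(3) eV])
  have E2: "\<nu> * grad_ip \<Omega> b e + \<rho> * l2_ip \<Omega> (divg b) (divg e) = f e + l2_ip \<Omega> (divg Q) (divg e)"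
    using US[OF i1(1) eV] unfolding b_def Q_def i1(2) by simp
  define ga where "ga x = (\<Sum>j\<in>UNIV. \<Sum>l\<in>UNIV. pd a l j x * pd e l j x)" for x
  define gb where "gb x = (\<Sum>j\<in>UNIV. \<Sum>l\<in>UNIV. pd b l j x * pd e l j x)" for x
  have Gga: "good \<Omega> N ga" unfolding ga_def[abs_def] N_def by (rule grad_good[OF tri op aX eX])
  have Ggb: "good \<Omega> N gb" unfolding gb_def[abs_def] N_def by (rule grad_good[OF tri op bX eX])
  have Gda: "good \<Omega> N (divg a)" and Gdb: "good \<Omega> N (divg b)" and Gde: "good \<Omega> N (divg e)"
    and GdP: "good \<Omega> N (divg P)" and GdQ: "good \<Omega> N (divg Q)"
    unfolding N_def using divg_good[OF tri op] aX bX eX PX QX by auto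
  have Gae: "good \<Omega> N (\<lambda>x. divg a x * divg e x)" using good_mult[OF Gda Gde] .
  have Gbe: "good \<Omega> N (\<lambda>x. divg b x * divg e x)" using good_mult[OF Gdb Gde] .
  have GPe: "good \<Omega> N (\<lambda>x. divg P x * divg e x)" using good_mult[OF GdP Gde] .
  have GQe: "good \<Omega> N (\<lambda>x. divg Q x * divg e x)" using good_mult[OF GdQ Gde] .
  have Ga2: "good \<Omega> N (\<lambda>x. (divg a x)\<^sup>2)" using good_mult[OF Gda Gda] by (simp add: power2_eq_square)
  have Gb2: "good \<Omega> N (\<lambda>x. (divg b x)\<^sup>2)" using good_mult[OF Gdb Gdb] by (simp add: power2_eq_square)
  note LE = LINT_eq[OF lm _ negN]
  have E1': "\<nu> * integral \<Omega> ga + \<rho> * integral \<Omega> (\<lambda>x. divg a x * divg e x)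
      = f e + integral \<Omega> (\<lambda>x. divg P x * divg e x)"
  proof -
    have "grad_ip \<Omega> a e = integral \<Omega> ga" unfolding grad_ip_def using LE(1)[OF Gga] unfolding ga_def .
    moreover have "l2_ip \<Omega> (divg a) (divg e) = integral \<Omega> (\<lambda>x. divg a x * divg e x)"
      unfolding l2_ip_def by (rule LE(1)[OF Gae])
    moreover have "l2_ip \<Omega> (divg P) (divg e) = integral \<Omega> (\<lambda>x. divg P x * divg e x)"
      unfolding l2_ip_def by (rule LE(1)[OF GPe])
    ultimately show ?thesis using E1 by simp
  qed
  have E2': "\<nu> * integral \<Omega> gb + \<rho> * integral \<Omega> (\<lambda>x. divg b x * divg e x)
      = f e + integral \<Omega> (\<lambda>x. divg Q x * divg e x)"
  proof -
    have "grad_ip \<Omega> b e = integral \<Omega> gb" unfolding grad_ip_def using LE(1)[OF Ggb] unfolding gb_def .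
    moreover have "l2_ip \<Omega> (divg b) (divg e) = integral \<Omega> (\<lambda>x. divg b x * divg e x)"
      unfolding l2_ip_def by (rule LE(1)[OF Gbe])
    moreover have "l2_ip \<Omega> (divg Q) (divg e) = integral \<Omega> (\<lambda>x. divg Q x * divg e x)"
      unfolding l2_ip_def by (rule LE(1)[OF GQe])
    ultimately show ?thesis using E2 by simp
  qed
  define H where "H x = \<nu> * (ga x - gb x) + \<rho> * (divg a x * divg e x - divg b x * divg e x)
      - (divg P x * divg e x - divg Q x * divg e x)" for x
  have "(H has_integral (\<nu> * (integral \<Omega> ga - integral \<Omega> gb)
      + \<rho> * (integral \<Omega> (\<lambda>x. divg a x * divg e x) - integral \<Omega> (\<lambda>x. divg b x * divg e x))
      - (integral \<Omega> (\<lambda>x. divg P x * divg e x) - integral \<Omega> (\<lambda>x. divg Q x * divg e x)))) \<Omega>"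
    unfolding H_def
    by (intro has_integral_diff has_integral_add has_integral_mult_right LE(2) Gga Ggb Gae Gbe GPe GQe)
  moreover have "\<nu> * (integral \<Omega> ga - integral \<Omega> gb)
      + \<rho> * (integral \<Omega> (\<lambda>x. divg a x * divg e x) - integral \<Omega> (\<lambda>x. divg b x * divg e x))
      - (integral \<Omega> (\<lambda>x. divg P x * divg e x) - integral \<Omega> (\<lambda>x. divg Q x * divg e x)) = 0"
    unfolding right_diff_distrib using E1' E2' by linarith
  ultimately have HI: "(H has_integral 0) \<Omega>" by simp
  define K where "K x = \<nu> * (\<Sum>j\<in>UNIV. \<Sum>l\<in>UNIV. (pd e l j x)\<^sup>2) + \<rho> * ((divg a x)\<^sup>2 - divg a x * divg b x)" for x
  have HK: "K x = H x" if x: "x \<in> \<Omega> - N" for x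
  proof -
    have da: "a differentiable (at x)" and db: "b differentiable (at x)" and dQ: "Q differentiable (at x)"
      using Xh_diff_at[OF tri _ _ _] aX bX QX x unfolding N_def by auto
    have e1: "e = (\<lambda>y. 1 *\<^sub>R a y + (-1) *\<^sub>R b y)" unfolding e_def by auto
    have P1: "P = (\<lambda>y. 1 *\<^sub>R Q y + (-\<rho>) *\<^sub>R b y)" unfolding PQ by auto
    have pe: "pd e l j x = pd a l j x - pd b l j x" for l j
      unfolding e1 pd_lin[OF da db] by simp
    have de: "divg e x = divg a x - divg b x"
      unfolding e1 divg_lin[OF da db] by simp
    have dP: "divg P x = divg Q x - \<rho> * divg b x"
      unfolding P1 divg_lin[OF dQ db] by simp
    have "ga x - gb x = (\<Sum>j\<in>UNIV. \<Sum>l\<in>UNIV. (pd e l j x)\<^sup>2)"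
      unfolding ga_def gb_def sum_subtractf[symmetric]
      by (intro sum.cong refl) (simp add: pe power2_eq_square algebra_simps)
    then show ?thesis unfolding H_def K_def de dP by (simp add: algebra_simps power2_eq_square)
  qed
  have KI: "(K has_integral 0) \<Omega>"
    by (rule has_integral_spike[OF negN _ HI]) (use HK in auto)
  define M where "M x = \<rho> / 2 * ((divg a x)\<^sup>2 - (divg b x)\<^sup>2)" for x
  have MI: "(M has_integral (\<rho> / 2 * (integral \<Omega> (\<lambda>x. (divg a x)\<^sup>2) - integral \<Omega> (\<lambda>x. (divg b x)\<^sup>2)))) \<Omega>"
    unfolding M_def by (intro has_integral_mult_right has_integral_diff LE(2) Ga2 Gb2)
  have MK: "M x \<le> K x" for x
  proof -
    have s: "0 \<le> (\<Sum>j\<in>UNIV. \<Sum>l\<in>UNIV. (pd e l j x)\<^sup>2)" by (intro sum_nonneg) auto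
    have id: "\<rho> * ((divg a x)\<^sup>2 - divg a x * divg b x) - \<rho> / 2 * ((divg a x)\<^sup>2 - (divg b x)\<^sup>2)
       = \<rho> / 2 * (divg a x - divg b x)\<^sup>2"
      by (simp add: power2_eq_square field_simps)
    have "0 \<le> \<rho> / 2 * (divg a x - divg b x)\<^sup>2" using rho by simp
    then have "\<rho> / 2 * ((divg a x)\<^sup>2 - (divg b x)\<^sup>2) \<le> \<rho> * ((divg a x)\<^sup>2 - divg a x * divg b x)"
      using id by linarith
    moreover have "0 \<le> \<nu> * (\<Sum>j\<in>UNIV. \<Sum>l\<in>UNIV. (pd e l j x)\<^sup>2)" using s nu by simp
    ultimately show ?thesis unfolding M_def K_def by linarith
  qed
  have "\<rho> / 2 * (integral \<Omega> (\<lambda>x. (divg a x)\<^sup>2) - integral \<Omega> (\<lambda>x. (divg b x)\<^sup>2)) \<le> 0"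
    by (rule has_integral_le[OF MI KI MK])
  then have le: "integral \<Omega> (\<lambda>x. (divg a x)\<^sup>2) \<le> integral \<Omega> (\<lambda>x. (divg b x)\<^sup>2)"
    using rho by (simp add: mult_le_0_iff)
  show ?thesis
    unfolding l2_norm_def LE(1)[OF Ga2] LE(1)[OF Gb2] a_def[symmetric] b_def[symmetric]
    using le by simp
qed

end
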